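(* Let $\{\alpha_I\}_{I\in\mathcal{D}}$ be a dyadic Carleson sequence: $\alpha_I\ge0$ and there is $C_0$ with $\sum_{I\subset J,\,I\in\mathcal{D}}\alpha_I|I|\le C_0|J|$ for all $J\in\mathcal{D}$. Let $\Psi:(0,1]\to(0,\infty)$ be a decreasing function such that $s\mapsto s\Psi(s)$ is increasing and $\int_0^1\frac{ds}{s\Psi(s)}<\infty$. Then there is a constant $C$ (depending only on $\Psi$ and $C_0$) such that for every weight $w$ on $\mathbb{R}$ with $\mathbf{n}_\Psi(N_I^w)<\infty$ for all $I\in\mathcal{D}$, and every $J\in\mathcal{D}$, \[ \sum_{I\in\mathcal{D},\,I\subset J}\mathbf{n}_\Psi(N_I^w)^{-1}\langle w\rangle_I^2\,\alpha_I\,|I|\le C\,w(J), \] where in the summation the intervals $I$ on which $w\equiv0$ are skipped.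
   Context: $\mathcal{D}$ is the standard dyadic lattice of intervals in $\mathbb{R}$. A weight is a nonnegative locally integrable function; $w(J)=\int_Jw$, $\langle w\rangle_I=\frac1{|I|}\int_Iw$. $N_I^w(t)=\frac{1}{|I|}|\{x\in I:w(x)>t\}|$ and $\mathbf{n}_\Psi(N)=\int_0^\infty N(t)\Psi(N(t))\,dt$ (integrand $0$ where $N(t)=0$). *)

theory Defs
  imports "HOL-Analysis.Analysis"
begin

definition dyadic_intervals :: "real set set" where
  "dyadic_intervals =
     {{of_int j * 2 powr of_int k ..< (of_int j + 1) * 2 powr of_int k} | j k. True}"

definition len :: "real set \<Rightarrow> real" where
  "len I = measure lborel I"

definition wmeas :: "(real \<Rightarrow> real) \<Rightarrow> real set \<Rightarrow> real" where
  "wmeas w J = (LINT x:J|lborel. w x)"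

definition avg :: "(real \<Rightarrow> real) \<Rightarrow> real set \<Rightarrow> real" where
  "avg w I = wmeas w I / len I"

definition is_weight :: "(real \<Rightarrow> real) \<Rightarrow> bool" where
  "is_weight w \<longleftrightarrow> (\<forall>x. 0 \<le> w x) \<and> (\<forall>K. compact K \<longrightarrow> set_integrable lborel K w)"

definition distN :: "(real \<Rightarrow> real) \<Rightarrow> real set \<Rightarrow> real \<Rightarrow> real" where
  "distN w I t = measure lborel {x \<in> I. w x > t} / len I"

definition nPsi :: "(real \<Rightarrow> real) \<Rightarrow> (real \<Rightarrow> real) \<Rightarrow> ennreal" where
  "nPsi \<Psi> N = (\<integral>\<^sup>+ t \<in> {0<..}. ennreal (if N t = 0 then 0 else N t * \<Psi> (N t)) \<partial>lborel)"

definition carleson :: "(real set \<Rightarrow> real) \<Rightarrow> real \<Rightarrow> bool" where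
  "carleson \<alpha> C0 \<longleftrightarrow> (\<forall>I\<in>dyadic_intervals. 0 \<le> \<alpha> I) \<and>
     (\<forall>J\<in>dyadic_intervals.
        (\<Sum>\<^sub>\<infinity>I\<in>{I\<in>dyadic_intervals. I \<subseteq> J}. ennreal (\<alpha> I * len I)) \<le> ennreal (C0 * len J))"

end

theory Submission
  imports Defs
begin


definition DI :: "int \<Rightarrow> int \<Rightarrow> real set" where
  "DI j k = {of_int j * 2 powr of_int k ..< (of_int j + 1) * 2 powr of_int k}"

lemma dyadic_eq: "dyadic_intervals = (\<lambda>(j,k). DI j k) ` UNIV"
  unfolding dyadic_intervals_def DI_def by auto

lemma countable_dyadic: "countable dyadic_intervals"
  unfolding dyadic_eq by simp

lemma DI_mem: "x \<in> DI j k \<longleftrightarrow> of_int j \<le> x / 2 powr k \<and> x / 2 powr k < of_int j + 1"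
  unfolding DI_def by (auto simp: pos_le_divide_eq pos_divide_less_eq)

lemma DI_sets_borel[measurable]: "DI j k \<in> sets borel"
  unfolding DI_def by simp

lemma DI_sets[measurable]: "DI j k \<in> sets lborel"
  unfolding DI_def by simp

lemma emeasure_DI: "emeasure lborel (DI j k) = ennreal (2 powr k)"
  unfolding DI_def by (simp add: algebra_simps)

lemma len_DI: "len (DI j k) = 2 powr k"
  unfolding len_def measure_def emeasure_DI by simp

lemma DI_ne: "of_int j * 2 powr of_int k \<in> DI j k"
  unfolding DI_def by (simp add: algebra_simps)

lemma DI_nest:
  assumes "k \<le> k'" "x \<in> DI j k" "x \<in> DI j' k'"
  shows "DI j k \<subseteq> DI j' k'"
proof
  define m where "m = nat (k' - k)"
  have pk: "(2::real) powr k' = 2 powr k * 2 ^ m"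
    using assms(1) by (simp add: m_def powr_realpow[symmetric] powr_add[symmetric])
  have pos: "(0::real) < 2 powr k" by simp
  let ?P = "(2::real)^m"
  have P: "real_of_int (j' * 2^m) = of_int j' * ?P" "real_of_int ((j'+1) * 2^m) = (of_int j'+1) * ?P" by simp_all
  from assms(2) have x1: "of_int j \<le> x / 2 powr k" "x / 2 powr k < of_int j + 1" by (auto simp: DI_mem)
  from assms(3) have "of_int j' \<le> x / 2 powr k'" "x / 2 powr k' < of_int j' + 1" by (auto simp: DI_mem)
  hence x2: "of_int j' * ?P \<le> x / 2 powr k" "x / 2 powr k < (of_int j' + 1) * ?P"
    by (auto simp: pk field_simps)
  have "real_of_int (j' * 2^m) < of_int (j + 1)" using x1 x2 P by linarith
  hence a: "j' * 2^m \<le> j" by linarith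
  have "real_of_int j < of_int ((j'+1) * 2^m)" using x1 x2 P by linarith
  hence b: "j + 1 \<le> (j'+1) * 2^m" by linarith
  have a': "of_int j' * ?P \<le> of_int j" using a P(1) by (metis of_int_le_iff)
  have b': "of_int j + 1 \<le> (of_int j'+1) * ?P" using b P(2) by (metis of_int_add of_int_1 of_int_le_iff)
  fix y assume "y \<in> DI j k"
  hence "of_int j \<le> y / 2 powr k" "y / 2 powr k < of_int j + 1" by (auto simp: DI_mem)
  hence "of_int j' * ?P \<le> y / 2 powr k" "y / 2 powr k < (of_int j' + 1) * ?P" using a' b' by linarith+
  hence "of_int j' \<le> y / 2 powr k'" "y / 2 powr k' < of_int j' + 1"
    by (auto simp: pk field_simps)
  thus "y \<in> DI j' k'" by (simp add: DI_mem)
qed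

lemma dyadic_cases: "I \<in> dyadic_intervals \<Longrightarrow> (\<And>j k. I = DI j k \<Longrightarrow> P) \<Longrightarrow> P"
  unfolding dyadic_eq by auto

lemma dyadic_nonempty: "I \<in> dyadic_intervals \<Longrightarrow> I \<noteq> {}"
  by (erule dyadic_cases) (use DI_ne in blast)

lemma dyadic_sets[measurable]: "I \<in> dyadic_intervals \<Longrightarrow> I \<in> sets lborel"
  by (erule dyadic_cases) simp

lemma dyadic_sets_borel[measurable]: "I \<in> dyadic_intervals \<Longrightarrow> I \<in> sets borel"
  by (erule dyadic_cases) simp

lemma dyadic_len_pos: "I \<in> dyadic_intervals \<Longrightarrow> 0 < len I"
  by (erule dyadic_cases) (simp add: len_DI)

lemma dyadic_emeasure: "I \<in> dyadic_intervals \<Longrightarrow> emeasure lborel I = ennreal (len I)"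
  by (erule dyadic_cases) (simp add: len_DI emeasure_DI)

lemma dyadic_bounded: "I \<in> dyadic_intervals \<Longrightarrow> \<exists>a b. I \<subseteq> {a..b}"
proof (erule dyadic_cases)
  fix j k assume "I = DI j k"
  then show ?thesis
    by (intro exI[of _ "of_int j * 2 powr of_int k"] exI[of _ "(of_int j+1) * 2 powr of_int k"]) (auto simp: DI_def)
qed

lemma dyadic_nest_or_disj:
  assumes "I \<in> dyadic_intervals" "I' \<in> dyadic_intervals" "I \<inter> I' \<noteq> {}"
  shows "I \<subseteq> I' \<or> I' \<subseteq> I"
proof -
  obtain j k where I: "I = DI j k" using assms(1) by (rule dyadic_cases)
  obtain j' k' where I': "I' = DI j' k'" using assms(2) by (rule dyadic_cases)
  obtain x where "x \<in> I" "x \<in> I'" using assms(3) by auto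
  thus ?thesis unfolding I I' using DI_nest by (cases "k \<le> k'") auto
qed

lemma DI_sub_scale:
  assumes "DI j k \<subseteq> DI j' k'" shows "k \<le> k'"
proof -
  have "emeasure lborel (DI j k) \<le> emeasure lborel (DI j' k')" using assms by (rule emeasure_mono) simp
  hence "(2::real) powr k \<le> 2 powr k'" by (simp add: emeasure_DI)
  thus ?thesis by simp
qed

lemma DI_unique:
  assumes "x \<in> DI j k" shows "j = \<lfloor>x / 2 powr k\<rfloor>"
  using assms by (metis DI_mem floor_unique)

lemma ancestors_finite:
  assumes "I \<in> dyadic_intervals" "J \<in> dyadic_intervals"
  shows "finite {Q \<in> dyadic_intervals. I \<subseteq> Q \<and> Q \<subseteq> J}"
proof -
  obtain j k where I: "I = DI j k" using assms(1) by (rule dyadic_cases)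
  obtain j0 k0 where J: "J = DI j0 k0" using assms(2) by (rule dyadic_cases)
  define a :: real where "a = of_int j * 2 powr of_int k"
  have aI: "a \<in> I" unfolding I a_def by (rule DI_ne)
  have "{Q \<in> dyadic_intervals. I \<subseteq> Q \<and> Q \<subseteq> J} \<subseteq> (\<lambda>k'. DI \<lfloor>a / 2 powr k'\<rfloor> k') ` {k..k0}"
  proof
    fix Q assume "Q \<in> {Q \<in> dyadic_intervals. I \<subseteq> Q \<and> Q \<subseteq> J}"
    then obtain j' k' where Q: "Q = DI j' k'" "I \<subseteq> Q" "Q \<subseteq> J" by (auto elim: dyadic_cases)
    have "k \<le> k'" "k' \<le> k0" using Q I J DI_sub_scale by blast+
    moreover have "j' = \<lfloor>a / 2 powr k'\<rfloor>" using aI Q DI_unique by blast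
    ultimately show "Q \<in> (\<lambda>k'. DI \<lfloor>a / 2 powr k'\<rfloor> k') ` {k..k0}" using Q by auto
  qed
  thus ?thesis by (rule finite_subset) simp
qed



lemma infsum_nn:
  fixes f :: "'a \<Rightarrow> ennreal"
  assumes A: "countable A"
  shows "infsum f A = (\<integral>\<^sup>+x. f x \<partial>count_space A)"
proof -
  have inf: "infsum f A = (SUP F\<in>{F. finite F \<and> F\<subseteq>A}. sum f F)"
    by (rule nonneg_infsum_complete) simp
  have le1: "sum f F \<le> (\<integral>\<^sup>+x. f x \<partial>count_space A)" if "finite F" "F \<subseteq> A" for F
  proof -
    have "sum f F = (\<integral>\<^sup>+x. f x \<partial>count_space F)" using that by (simp add: nn_integral_count_space_finite)
    also have "\<dots> = (\<integral>\<^sup>+x. f x * indicator F x \<partial>count_space UNIV)"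
      by (simp add: nn_integral_count_space_indicator)
    also have "\<dots> \<le> (\<integral>\<^sup>+x. f x * indicator A x \<partial>count_space UNIV)"
      using that by (intro nn_integral_mono) (auto split: split_indicator)
    also have "\<dots> = (\<integral>\<^sup>+x. f x \<partial>count_space A)"
      by (simp add: nn_integral_count_space_indicator)
    finally show ?thesis .
  qed
  have le2: "(\<integral>\<^sup>+x. f x \<partial>count_space A) \<le> (SUP F\<in>{F. finite F \<and> F\<subseteq>A}. sum f F)"
  proof (cases "finite A")
    case True
    then show ?thesis by (simp add: nn_integral_count_space_finite) (intro SUP_upper2[of A], auto)
  next
    case False
    note bij = bij_betw_from_nat_into[OF A False]
    have "(\<integral>\<^sup>+x. f x \<partial>count_space A) = (\<integral>\<^sup>+n. f (from_nat_into A n) \<partial>count_space UNIV)"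
      by (rule nn_integral_bij_count_space[symmetric, OF bij])
    also have "\<dots> = (\<Sum>n. f (from_nat_into A n))" by (rule nn_integral_count_space_nat)
    also have "\<dots> = (SUP n. \<Sum>i<n. f (from_nat_into A i))" by (rule suminf_eq_SUP)
    also have "\<dots> \<le> (SUP F\<in>{F. finite F \<and> F\<subseteq>A}. sum f F)"
    proof (rule SUP_least)
      fix n
      have inj: "inj_on (from_nat_into A) {..<n}" using bij by (auto simp: bij_betw_def inj_on_def)
      have "(\<Sum>i<n. f (from_nat_into A i)) = sum f (from_nat_into A ` {..<n})"
        using inj by (simp add: sum.reindex)
      also have "\<dots> \<le> (SUP F\<in>{F. finite F \<and> F\<subseteq>A}. sum f F)"
        using False by (intro SUP_upper) (auto intro: from_nat_into)
      finally show "(\<Sum>i<n. f (from_nat_into A i)) \<le> (SUP F\<in>{F. finite F \<and> F\<subseteq>A}. sum f F)" .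
    qed
    finally show ?thesis .
  qed
  show ?thesis unfolding inf using le1 le2 by (intro antisym SUP_least) auto
qed

lemma maximal_lemma:
  fixes \<alpha> :: "real set \<Rightarrow> real" and E J :: "real set" and lam C0 :: real
  assumes car: "carleson \<alpha> C0" and E[measurable]: "E \<in> sets lborel" and J: "J \<in> dyadic_intervals"
    and lam: "0 < lam"
  shows "(\<integral>\<^sup>+I. ennreal (\<alpha> I * len I) \<partial>count_space {I\<in>dyadic_intervals. I \<subseteq> J \<and> lam * len I < measure lborel (E \<inter> I)})
         \<le> ennreal (max C0 0 / lam) * emeasure lborel (E \<inter> J)"
proof -
  define F where "F = {I\<in>dyadic_intervals. I \<subseteq> J \<and> lam * len I < measure lborel (E \<inter> I)}"
  define Mx where "Mx = {Q\<in>F. \<forall>Q'\<in>F. Q \<subseteq> Q' \<longrightarrow> Q' = Q}"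
  define C where "C = max C0 0"
  define a where "a I = ennreal (\<alpha> I * len I)" for I
  have cntF: "countable F" unfolding F_def by (rule countable_subset[OF _ countable_dyadic]) auto
  have cntM: "countable Mx" unfolding Mx_def by (rule countable_subset[OF _ cntF]) auto
  have MF: "Mx \<subseteq> F" unfolding Mx_def by auto
  have exmax: "\<exists>Q\<in>Mx. I \<subseteq> Q" if I: "I \<in> F" for I
  proof -
    define A where "A = {Q\<in>F. I \<subseteq> Q}"
    have "A \<subseteq> {Q \<in> dyadic_intervals. I \<subseteq> Q \<and> Q \<subseteq> J}" unfolding A_def F_def by auto
    moreover have "finite {Q \<in> dyadic_intervals. I \<subseteq> Q \<and> Q \<subseteq> J}"
      using I J by (intro ancestors_finite) (auto simp: F_def)
    ultimately have fA: "finite A" by (rule finite_subset)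
    have "I \<in> A" using I by (auto simp: A_def)
    then obtain m where m: "m \<in> A" "\<And>b. b \<in> A \<Longrightarrow> m \<le> b \<Longrightarrow> m = b"
      using finite_has_maximal[OF fA] by blast
    have "m \<in> Mx" unfolding Mx_def using m by (auto simp: A_def)
    thus ?thesis using m(1) by (auto simp: A_def)
  qed
  have disj: "disjoint_family_on (\<lambda>Q. E \<inter> Q) Mx"
    unfolding disjoint_family_on_def
  proof (intro ballI impI)
    fix Q1 Q2 assume Q: "Q1 \<in> Mx" "Q2 \<in> Mx" "Q1 \<noteq> Q2"
    have "Q1 \<inter> Q2 = {}"
    proof (rule ccontr)
      assume "Q1 \<inter> Q2 \<noteq> {}"
      hence "Q1 \<subseteq> Q2 \<or> Q2 \<subseteq> Q1" using Q by (intro dyadic_nest_or_disj) (auto simp: Mx_def F_def)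
      thus False using Q by (auto simp: Mx_def)
    qed
    thus "(E \<inter> Q1) \<inter> (E \<inter> Q2) = {}" by auto
  qed
  have "(\<integral>\<^sup>+I. a I \<partial>count_space F) \<le> (\<integral>\<^sup>+I. (\<integral>\<^sup>+Q. a I * of_bool (I \<subseteq> Q) \<partial>count_space Mx) \<partial>count_space F)"
  proof (rule nn_integral_mono)
    fix I assume "I \<in> space (count_space F)"
    then obtain Q where "Q \<in> Mx" "I \<subseteq> Q" using exmax by auto
    hence "a I * of_bool (I \<subseteq> Q) \<le> (\<integral>\<^sup>+Q. a I * of_bool (I \<subseteq> Q) \<partial>count_space Mx)"
      by (intro nn_integral_ge_point)
    thus "a I \<le> (\<integral>\<^sup>+Q. a I * of_bool (I \<subseteq> Q) \<partial>count_space Mx)" using \<open>I \<subseteq> Q\<close> by simp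
  qed
  also have "\<dots> = (\<integral>\<^sup>+Q. (\<integral>\<^sup>+I. a I * of_bool (I \<subseteq> Q) \<partial>count_space F) \<partial>count_space Mx)"
    by (rule nn_integral_count_space_nn_integral[OF cntM]) simp
  also have "\<dots> \<le> (\<integral>\<^sup>+Q. ennreal (C / lam) * emeasure lborel (E \<inter> Q) \<partial>count_space Mx)"
  proof (rule nn_integral_mono)
    fix Q assume "Q \<in> space (count_space Mx)"
    hence Q: "Q \<in> F" "Q \<in> Mx" using MF by auto
    hence Qd: "Q \<in> dyadic_intervals" and Qm: "lam * len Q < measure lborel (E \<inter> Q)" by (auto simp: F_def)
    have cQ: "countable {I\<in>dyadic_intervals. I \<subseteq> Q}" by (rule countable_subset[OF _ countable_dyadic]) auto
    have "(\<integral>\<^sup>+I. a I * of_bool (I \<subseteq> Q) \<partial>count_space F)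
          = (\<integral>\<^sup>+I. a I * of_bool (I \<subseteq> Q) * indicator F I \<partial>count_space UNIV)"
      by (simp add: nn_integral_count_space_indicator)
    also have "\<dots> \<le> (\<integral>\<^sup>+I. a I * indicator {I\<in>dyadic_intervals. I \<subseteq> Q} I \<partial>count_space UNIV)"
      by (intro nn_integral_mono) (auto simp: F_def split: split_indicator)
    also have "\<dots> = (\<integral>\<^sup>+I. a I \<partial>count_space {I\<in>dyadic_intervals. I \<subseteq> Q})"
      by (simp add: nn_integral_count_space_indicator)
    also have "\<dots> = (\<Sum>\<^sub>\<infinity>I\<in>{I\<in>dyadic_intervals. I \<subseteq> Q}. a I)" by (rule infsum_nn[OF cQ, symmetric])
    also have "\<dots> \<le> ennreal (C0 * len Q)" using car Qd unfolding carleson_def a_def by blast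
    also have "\<dots> \<le> ennreal (C * len Q)" by (intro ennreal_leI mult_right_mono) (auto simp: C_def intro: less_imp_le dyadic_len_pos[OF Qd])
    also have "\<dots> \<le> ennreal (C / lam * measure lborel (E \<inter> Q))"
    proof (intro ennreal_leI)
      have "C * len Q = C / lam * (lam * len Q)" using lam by simp
      also have "\<dots> \<le> C / lam * measure lborel (E \<inter> Q)"
        using Qm lam by (intro mult_left_mono) (auto simp: C_def)
      finally show "C * len Q \<le> C / lam * measure lborel (E \<inter> Q)" .
    qed
    also have "\<dots> = ennreal (C / lam) * emeasure lborel (E \<inter> Q)"
    proof -
      have "emeasure lborel (E \<inter> Q) \<le> emeasure lborel Q" using dyadic_sets_borel[OF Qd] by (intro emeasure_mono) auto
      hence fin: "emeasure lborel (E \<inter> Q) \<noteq> top" using dyadic_emeasure[OF Qd] by (auto simp: top_unique)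
      have "ennreal (C / lam * measure lborel (E \<inter> Q)) = ennreal (C / lam) * ennreal (measure lborel (E \<inter> Q))"
        using lam by (intro ennreal_mult) (auto simp: C_def)
      then show ?thesis by (simp add: emeasure_eq_ennreal_measure[OF fin])
    qed
    finally show "(\<integral>\<^sup>+I. a I * of_bool (I \<subseteq> Q) \<partial>count_space F) \<le> ennreal (C / lam) * emeasure lborel (E \<inter> Q)" .
  qed
  also have "\<dots> = ennreal (C / lam) * (\<integral>\<^sup>+Q. emeasure lborel (E \<inter> Q) \<partial>count_space Mx)"
    by (rule nn_integral_cmult) simp
  also have "(\<integral>\<^sup>+Q. emeasure lborel (E \<inter> Q) \<partial>count_space Mx) = emeasure lborel (\<Union>Q\<in>Mx. E \<inter> Q)"
    using disj cntM MF by (intro emeasure_UN_countable[symmetric]) (auto simp: F_def intro: dyadic_sets)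
  also have "emeasure lborel (\<Union>Q\<in>Mx. E \<inter> Q) \<le> emeasure lborel (E \<inter> J)"
    using MF J by (intro emeasure_mono) (auto simp: F_def intro: dyadic_sets)
  finally show ?thesis unfolding F_def a_def C_def by (simp add: mult_left_mono)
qed



lemma ennreal_le_suminf: "(f i :: ennreal) \<le> (\<Sum>k. f k)"
  using ennreal_suminf_lessD[of f "f i" i] by (meson not_le order_less_irrefl)

lemma half_level:
  fixes s :: real assumes "0 < s" "s \<le> 1"
  shows "\<exists>k. (1/2)^(Suc k) < s \<and> s \<le> (1/2)^k"
proof -
  have ex: "\<exists>n. (1/2::real)^n < s" using real_arch_pow_inv[of s "1/2"] assms by auto
  define n where "n = (LEAST n. (1/2::real)^n < s)"
  have n: "(1/2::real)^n < s" unfolding n_def by (rule LeastI_ex[OF ex])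
  have "n \<noteq> 0"
  proof
    assume "n = 0" with n assms show False by simp
  qed
  then obtain k where k: "n = Suc k" by (cases n) auto
  have "\<not> (1/2::real)^k < s" using k unfolding n_def
    using not_less_Least[of k "\<lambda>n. (1/2::real)^n < s"] by simp
  thus ?thesis using n k by (auto intro!: exI[of _ k])
qed

lemma half_disj:
  fixes s :: real
  assumes "(1/2)^(Suc k) < s" "s \<le> (1/2)^k" "(1/2)^(Suc k') < s" "s \<le> (1/2)^k'"
  shows "k = k'"
proof (rule ccontr)
  assume "k \<noteq> k'"
  then consider "k < k'" | "k' < k" by linarith
  thus False
  proof cases
    case 1
    hence "(1/2::real)^k' \<le> (1/2)^(Suc k)" by (intro power_decreasing) auto
    thus False using assms by linarith
  next
    case 2
    hence "(1/2::real)^k \<le> (1/2)^(Suc k')" by (intro power_decreasing) auto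
    thus False using assms by linarith
  qed
qed

lemma const_finite:
  fixes \<Psi> :: "real \<Rightarrow> real"
  assumes pos: "\<forall>s\<in>{0<..1}. 0 < \<Psi> s"
    and inc: "mono_on {0<..1} (\<lambda>s. s * \<Psi> s)"
  shows "(\<Sum>k. ennreal (1 / \<Psi> ((1/2)^k))) \<le> 2 * (\<integral>\<^sup>+ s \<in> {0<..1}. ennreal (1 / (s * \<Psi> s)) \<partial>lborel)"
proof -
  define P where "P k = {(1/2::real)^(Suc k)<..(1/2)^k}" for k
  define cc where "cc k = 1 / ((1/2::real)^k * \<Psi> ((1/2)^k))" for k
  have pk: "0 < \<Psi> ((1/2::real)^k)" for k using pos by (simp add: power_le_one)
  have pt: "(\<Sum>k. ennreal (cc k) * indicator (P k) s) \<le> ennreal (1 / (s * \<Psi> s)) * indicator {0<..1} s" for s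
  proof (cases "0 < s \<and> s \<le> 1")
    case True
    then obtain k0 where k0: "(1/2)^(Suc k0) < s" "s \<le> (1/2)^k0" using half_level by blast
    have "(\<Sum>k. ennreal (cc k) * indicator (P k) s) = (\<Sum>k\<in>{k0}. ennreal (cc k) * indicator (P k) s)"
    proof (rule suminf_finite)
      fix k assume "k \<notin> {k0}"
      hence "s \<notin> P k" using half_disj[OF k0] by (auto simp: P_def)
      thus "ennreal (cc k) * indicator (P k) s = 0" by simp
    qed simp
    also have "\<dots> = ennreal (cc k0)" using k0 by (simp add: P_def)
    also have "\<dots> \<le> ennreal (1 / (s * \<Psi> s))"
    proof (rule ennreal_leI)
      have "s * \<Psi> s \<le> (1/2)^k0 * \<Psi> ((1/2)^k0)"
        using inc True k0 by (auto simp: mono_on_def power_le_one)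
      moreover have "0 < s * \<Psi> s" using True pos by auto
      ultimately show "cc k0 \<le> 1 / (s * \<Psi> s)" unfolding cc_def by (intro frac_le) auto
    qed
    finally show ?thesis using True by simp
  next
    case False
    hence "s \<notin> P k" for k
    proof -
      have "0 < (1/2::real)^(Suc k)" "(1/2::real)^k \<le> 1" by (auto simp: power_le_one)
      thus ?thesis using False by (auto simp: P_def)
    qed
    thus ?thesis using False by simp
  qed
  have eq: "ennreal (cc k) * emeasure lborel (P k) = ennreal (1/2 * (1 / \<Psi> ((1/2)^k)))" for k
  proof -
    have "emeasure lborel (P k) = ennreal ((1/2)^k - (1/2)^(Suc k))" unfolding P_def
      by (intro emeasure_lborel_Ioc) (auto intro: power_decreasing)
    moreover have "cc k * ((1/2)^k - (1/2)^(Suc k)) = 1/2 * (1 / \<Psi> ((1/2)^k))"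
      using pk[of k] by (simp add: cc_def field_simps)
    moreover have "0 \<le> cc k" using pk[of k] by (simp add: cc_def)
    moreover have "0 \<le> (1/2::real)^k - (1/2)^(Suc k)" by (simp add: power_decreasing)
    ultimately show ?thesis using ennreal_mult[of "cc k" "(1/2)^k - (1/2)^(Suc k)"] by metis
  qed
  have two: "2 * ennreal (1/2) = 1"
  proof -
    have "ennreal 2 * ennreal (1/2) = ennreal (2*(1/2))" by (rule ennreal_mult[symmetric]) auto
    thus ?thesis by simp
  qed
  have A: "(\<Sum>k. ennreal (1 / \<Psi> ((1/2)^k))) = 2 * (\<Sum>k. ennreal (1/2 * (1 / \<Psi> ((1/2)^k))))"
  proof -
    have e: "\<And>k. ennreal (1/2 * (1 / \<Psi> ((1/2)^k))) = ennreal (1/2) * ennreal (1 / \<Psi> ((1/2)^k))"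
      using pk by (intro ennreal_mult) (auto intro: less_imp_le)
    have "(\<Sum>k. ennreal (1/2 * (1 / \<Psi> ((1/2)^k)))) = ennreal (1/2) * (\<Sum>k. ennreal (1 / \<Psi> ((1/2)^k)))"
      by (simp only: e ennreal_suminf_cmult)
    hence "2 * (\<Sum>k. ennreal (1/2 * (1 / \<Psi> ((1/2)^k)))) = (2 * ennreal (1/2)) * (\<Sum>k. ennreal (1 / \<Psi> ((1/2)^k)))"
      by (simp only: mult.assoc)
    thus ?thesis by (simp only: two mult_1)
  qed
  have B1: "(\<Sum>k. ennreal (1/2 * (1 / \<Psi> ((1/2)^k)))) = (\<Sum>k. ennreal (cc k) * emeasure lborel (P k))"
    by (simp only: eq)
  have B2: "\<And>k. ennreal (cc k) * emeasure lborel (P k) = (\<integral>\<^sup>+s. ennreal (cc k) * indicator (P k) s \<partial>lborel)"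
    by (rule nn_integral_cmult_indicator[symmetric]) (simp add: P_def)
  have B3: "(\<Sum>k. \<integral>\<^sup>+s. ennreal (cc k) * indicator (P k) s \<partial>lborel) = (\<integral>\<^sup>+s. (\<Sum>k. ennreal (cc k) * indicator (P k) s) \<partial>lborel)"
    by (rule nn_integral_suminf[symmetric]) (simp add: P_def)
  have B4: "(\<integral>\<^sup>+s. (\<Sum>k. ennreal (cc k) * indicator (P k) s) \<partial>lborel) \<le> (\<integral>\<^sup>+ s \<in> {0<..1}. ennreal (1 / (s * \<Psi> s)) \<partial>lborel)"
    by (intro nn_integral_mono pt)
  have B: "(\<Sum>k. ennreal (1/2 * (1 / \<Psi> ((1/2)^k)))) \<le> (\<integral>\<^sup>+ s \<in> {0<..1}. ennreal (1 / (s * \<Psi> s)) \<partial>lborel)"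
    using B4 unfolding B1 B2 B3 .
  show ?thesis unfolding A by (rule mult_left_mono[OF B]) simp
qed



lemma meas_part:
  assumes I: "I \<in> dyadic_intervals" and E[measurable]: "E \<in> sets lborel"
  shows "emeasure lborel (E \<inter> I) = ennreal (measure lborel (E \<inter> I))"
    "measure lborel (E \<inter> I) \<le> len I"
proof -
  have le: "emeasure lborel (E \<inter> I) \<le> emeasure lborel I"
    using dyadic_sets_borel[OF I] by (intro emeasure_mono) auto
  hence fin: "emeasure lborel (E \<inter> I) \<noteq> top" using dyadic_emeasure[OF I] by (auto simp: top_unique)
  show e: "emeasure lborel (E \<inter> I) = ennreal (measure lborel (E \<inter> I))"
    by (rule emeasure_eq_ennreal_measure[OF fin])
  show "measure lborel (E \<inter> I) \<le> len I"
    using le dyadic_len_pos[OF I] unfolding e dyadic_emeasure[OF I] by simp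
qed

definition F2 :: "(real \<Rightarrow> real) \<Rightarrow> real \<Rightarrow> real" where
  "F2 \<Psi> s = (if s = 0 then 0 else s / \<Psi> s)"

lemma F2_bound:
  fixes \<Psi> :: "real \<Rightarrow> real"
  assumes pos: "\<forall>s\<in>{0<..1}. 0 < \<Psi> s" and dec: "antimono_on {0<..1} \<Psi>"
    and s: "0 \<le> s" "s \<le> 1"
  shows "ennreal (F2 \<Psi> s) \<le> (\<Sum>k. ennreal ((1/2)^k / \<Psi> ((1/2)^k)) * of_bool ((1/2)^(Suc k) < s))"
proof (cases "s = 0")
  case True thus ?thesis by (simp add: F2_def)
next
  case False
  hence s0: "0 < s" using s by auto
  then obtain k where k: "(1/2)^(Suc k) < s" "s \<le> (1/2)^k" using half_level s by blast
  have pk: "0 < \<Psi> ((1/2::real)^k)" using pos by (simp add: power_le_one)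
  have "\<Psi> ((1/2)^k) \<le> \<Psi> s" using dec k s0 s by (auto simp: monotone_on_def power_le_one)
  hence "s / \<Psi> s \<le> (1/2)^k / \<Psi> ((1/2)^k)" using k pk s0 by (intro frac_le) auto
  hence "ennreal (F2 \<Psi> s) \<le> ennreal ((1/2)^k / \<Psi> ((1/2)^k)) * of_bool ((1/2)^(Suc k) < s)"
    using False k by (simp add: F2_def ennreal_leI)
  also have "\<dots> \<le> (\<Sum>k. ennreal ((1/2)^k / \<Psi> ((1/2)^k)) * of_bool ((1/2)^(Suc k) < s))"
    by (rule ennreal_le_suminf)
  finally show ?thesis .
qed

lemma lemmaG:
  fixes \<Psi> :: "real \<Rightarrow> real" and \<alpha> :: "real set \<Rightarrow> real" and C0 :: real and E J :: "real set"
  assumes pos: "\<forall>s\<in>{0<..1}. 0 < \<Psi> s" and dec: "antimono_on {0<..1} \<Psi>"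
    and car: "carleson \<alpha> C0" and E[measurable]: "E \<in> sets lborel" and J: "J \<in> dyadic_intervals"
  shows "(\<integral>\<^sup>+I. ennreal (\<alpha> I * len I) * ennreal (F2 \<Psi> (measure lborel (E \<inter> I) / len I))
            \<partial>count_space {I\<in>dyadic_intervals. I \<subseteq> J})
         \<le> ennreal (2 * max C0 0) * (\<Sum>k. ennreal (1 / \<Psi> ((1/2)^k))) * emeasure lborel (E \<inter> J)"
proof -
  define DJ where "DJ = {I\<in>dyadic_intervals. I \<subseteq> J}"
  define a where "a I = ennreal (\<alpha> I * len I)" for I
  define s where "s I = measure lborel (E \<inter> I) / len I" for I
  define c where "c k = ennreal ((1/2::real)^k / \<Psi> ((1/2)^k))" for k
  define lam where "lam k = (1/2::real)^(Suc k)" for k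
  define C where "C = max C0 0"
  define \<mu> where "\<mu> = emeasure lborel (E \<inter> J)"
  have cnt: "countable DJ" unfolding DJ_def by (rule countable_subset[OF _ countable_dyadic]) auto
  have pk: "0 < \<Psi> ((1/2::real)^k)" for k using pos by (simp add: power_le_one)
  have "(\<integral>\<^sup>+I. a I * ennreal (F2 \<Psi> (s I)) \<partial>count_space DJ)
        \<le> (\<integral>\<^sup>+I. (\<Sum>k. a I * (c k * of_bool (lam k < s I))) \<partial>count_space DJ)"
  proof (rule nn_integral_mono)
    fix I assume "I \<in> space (count_space DJ)"
    hence I: "I \<in> dyadic_intervals" by (auto simp: DJ_def)
    have "0 \<le> s I" "s I \<le> 1" using meas_part[OF I E] dyadic_len_pos[OF I] by (auto simp: s_def)
    hence "ennreal (F2 \<Psi> (s I)) \<le> (\<Sum>k. c k * of_bool (lam k < s I))"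
      unfolding c_def lam_def by (rule F2_bound[OF pos dec])
    hence "a I * ennreal (F2 \<Psi> (s I)) \<le> a I * (\<Sum>k. c k * of_bool (lam k < s I))"
      by (rule mult_left_mono) simp
    thus "a I * ennreal (F2 \<Psi> (s I)) \<le> (\<Sum>k. a I * (c k * of_bool (lam k < s I)))"
      by (simp only: ennreal_suminf_cmult)
  qed
  also have "\<dots> = (\<integral>\<^sup>+I. (\<integral>\<^sup>+k. a I * (c k * of_bool (lam k < s I)) \<partial>count_space UNIV) \<partial>count_space DJ)"
    by (simp only: nn_integral_count_space_nat)
  also have "\<dots> = (\<integral>\<^sup>+k. (\<integral>\<^sup>+I. a I * (c k * of_bool (lam k < s I)) \<partial>count_space DJ) \<partial>count_space UNIV)"
    by (rule nn_integral_count_space_nn_integral[OF cnt, symmetric]) simp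
  also have "\<dots> = (\<Sum>k. (\<integral>\<^sup>+I. a I * (c k * of_bool (lam k < s I)) \<partial>count_space DJ))"
    by (rule nn_integral_count_space_nat)
  also have "\<dots> \<le> (\<Sum>k. (ennreal (2 * C) * \<mu>) * ennreal (1 / \<Psi> ((1/2)^k)))"
  proof (rule suminf_le[OF _ summableI summableI])
    fix k
    define F where "F = {I\<in>dyadic_intervals. I \<subseteq> J \<and> lam k * len I < measure lborel (E \<inter> I)}"
    have "(\<integral>\<^sup>+I. a I * (c k * of_bool (lam k < s I)) \<partial>count_space DJ)
          = (\<integral>\<^sup>+I. c k * (a I * indicator F I) \<partial>count_space UNIV)"
    proof -
      have "(\<integral>\<^sup>+I. a I * (c k * of_bool (lam k < s I)) \<partial>count_space DJ)
          = (\<integral>\<^sup>+I. a I * (c k * of_bool (lam k < s I)) * indicator DJ I \<partial>count_space UNIV)"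
        by (simp add: nn_integral_count_space_indicator)
      also have "\<dots> = (\<integral>\<^sup>+I. c k * (a I * indicator F I) \<partial>count_space UNIV)"
      proof (rule nn_integral_cong)
        fix I
        show "a I * (c k * of_bool (lam k < s I)) * indicator DJ I = c k * (a I * indicator F I)"
        proof (cases "I \<in> DJ")
          case True
          hence "len I > 0" by (auto simp: DJ_def intro: dyadic_len_pos)
          hence "(lam k < s I) = (lam k * len I < measure lborel (E \<inter> I))"
            by (simp add: s_def pos_less_divide_eq)
          thus ?thesis using True by (auto simp: F_def DJ_def mult.commute split: split_indicator)
        next
          case False thus ?thesis by (auto simp: F_def DJ_def split: split_indicator)
        qed
      qed
      finally show ?thesis .
    qed
    also have "\<dots> = c k * (\<integral>\<^sup>+I. a I * indicator F I \<partial>count_space UNIV)"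
      by (rule nn_integral_cmult) simp
    also have "(\<integral>\<^sup>+I. a I * indicator F I \<partial>count_space UNIV) = (\<integral>\<^sup>+I. a I \<partial>count_space F)"
      by (simp add: nn_integral_count_space_indicator)
    also have "\<dots> \<le> ennreal (C / lam k) * \<mu>"
      unfolding a_def F_def C_def \<mu>_def by (rule maximal_lemma[OF car E J]) (simp add: lam_def)
    finally have "(\<integral>\<^sup>+I. a I * (c k * of_bool (lam k < s I)) \<partial>count_space DJ) \<le> c k * (ennreal (C / lam k) * \<mu>)"
      by (simp add: mult_left_mono)
    also have "c k * (ennreal (C / lam k) * \<mu>) = (ennreal (2 * C) * \<mu>) * ennreal (1 / \<Psi> ((1/2)^k))"
    proof -
      have "c k * ennreal (C / lam k) = ennreal ((1/2::real)^k / \<Psi> ((1/2)^k) * (C / lam k))"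
        unfolding c_def using pk[of k] by (intro ennreal_mult[symmetric]) (auto simp: C_def lam_def)
      also have "(1/2::real)^k / \<Psi> ((1/2)^k) * (C / lam k) = 2 * C * (1 / \<Psi> ((1/2)^k))"
        using pk[of k] by (simp add: lam_def field_simps)
      also have "ennreal (2 * C * (1 / \<Psi> ((1/2)^k))) = ennreal (2 * C) * ennreal (1 / \<Psi> ((1/2)^k))"
        using pk[of k] by (intro ennreal_mult) (auto simp: C_def)
      finally show ?thesis by (simp add: ac_simps)
    qed
    finally show "(\<integral>\<^sup>+I. a I * (c k * of_bool (lam k < s I)) \<partial>count_space DJ) \<le> (ennreal (2 * C) * \<mu>) * ennreal (1 / \<Psi> ((1/2)^k))" .
  qed
  also have "\<dots> = (ennreal (2 * C) * \<mu>) * (\<Sum>k. ennreal (1 / \<Psi> ((1/2)^k)))"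
    by (rule ennreal_suminf_cmult)
  also have "\<dots> = ennreal (2 * C) * (\<Sum>k. ennreal (1 / \<Psi> ((1/2)^k))) * \<mu>"
    by (simp only: ac_simps)
  finally show ?thesis unfolding DJ_def a_def s_def C_def \<mu>_def .
qed



lemma weight_borel:
  assumes "is_weight w" shows "w \<in> borel_measurable borel"
proof -
  define u where "u n x = indicator {- real n..real n} x *\<^sub>R w x" for n x
  have wK: "\<forall>K. compact K \<longrightarrow> set_integrable lborel K w" using assms unfolding is_weight_def by (rule conjunct2)
  have "set_integrable lborel {- real n..real n} w" for n using wK[rule_format, OF compact_Icc] .
  hence m: "u n \<in> borel_measurable lborel" for n unfolding u_def set_integrable_def
    by (rule borel_measurable_integrable)
  have lim: "(\<lambda>n. u n x) \<longlonglongrightarrow> w x" for x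
  proof (rule tendsto_eventually)
    obtain N :: nat where N: "\<bar>x\<bar> \<le> real N" using real_arch_simple by blast
    have "u n x = w x" if "n \<ge> N" for n
    proof -
      have "real N \<le> real n" using that by simp
      hence "x \<in> {- real n..real n}" using N by auto
      thus ?thesis unfolding u_def by simp
    qed
    thus "eventually (\<lambda>n. u n x = w x) sequentially" unfolding eventually_sequentially by blast
  qed
  have "w \<in> borel_measurable lborel"
    by (rule borel_measurable_LIMSEQ_real[where u=u, OF lim m])
  then show ?thesis by (simp only: measurable_lborel2)
qed

lemma layer_cake:
  fixes w :: "real \<Rightarrow> real"
  assumes w[measurable]: "w \<in> borel_measurable borel" and nn: "\<And>x. 0 \<le> w x"
    and S[measurable]: "S \<in> sets borel"
  shows "(\<integral>\<^sup>+x\<in>S. ennreal (w x) \<partial>lborel) = (\<integral>\<^sup>+t\<in>{0<..}. emeasure lborel {x\<in>S. t < w x} \<partial>lborel)"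
proof -
  define f where "f x t = (indicator {p. fst p \<in> S \<and> 0 < snd p \<and> snd p < w (fst p)} (x,t) :: ennreal)" for x t
  have fm: "case_prod f \<in> borel_measurable (lborel \<Otimes>\<^sub>M lborel)"
    unfolding f_def by measurable
  have "(\<integral>\<^sup>+x\<in>S. ennreal (w x) \<partial>lborel) = (\<integral>\<^sup>+x. (\<integral>\<^sup>+t. f x t \<partial>lborel) \<partial>lborel)"
  proof (rule nn_integral_cong)
    fix x
    have "(\<integral>\<^sup>+t. f x t \<partial>lborel) = (\<integral>\<^sup>+t. indicator {0<..<w x} t * indicator S x \<partial>lborel)"
      by (intro nn_integral_cong) (auto simp: f_def split: split_indicator)
    also have "\<dots> = emeasure lborel {0<..<w x} * indicator S x"
      by (subst nn_integral_multc) auto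
    also have "\<dots> = ennreal (w x) * indicator S x" using nn[of x] by simp
    finally show "ennreal (w x) * indicator S x = (\<integral>\<^sup>+t. f x t \<partial>lborel)" by simp
  qed
  also have "\<dots> = (\<integral>\<^sup>+t. (\<integral>\<^sup>+x. f x t \<partial>lborel) \<partial>lborel)"
    by (rule lborel_pair.Fubini'[OF fm, symmetric])
  also have "\<dots> = (\<integral>\<^sup>+t\<in>{0<..}. emeasure lborel {x\<in>S. t < w x} \<partial>lborel)"
  proof (rule nn_integral_cong)
    fix t :: real
    have "(\<integral>\<^sup>+x. f x t \<partial>lborel) = (\<integral>\<^sup>+x. indicator {x\<in>S. t < w x} x * indicator {0<..} t \<partial>lborel)"
      by (intro nn_integral_cong) (auto simp: f_def split: split_indicator)
    also have "\<dots> = emeasure lborel {x\<in>S. t < w x} * indicator {0<..} t"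
      by (subst nn_integral_multc) auto
    finally show "(\<integral>\<^sup>+x. f x t \<partial>lborel) = emeasure lborel {x\<in>S. t < w x} * indicator {0<..} t" .
  qed
  finally show ?thesis .
qed

lemma wmeas_nn:
  assumes wt: "is_weight w" and I: "I \<in> dyadic_intervals"
  shows "(\<integral>\<^sup>+x\<in>I. ennreal (w x) \<partial>lborel) = ennreal (wmeas w I)" "0 \<le> wmeas w I"
proof -
  obtain a b where ab: "I \<subseteq> {a..b}" using dyadic_bounded[OF I] by blast
  have "\<forall>K. compact K \<longrightarrow> set_integrable lborel K w" using wt unfolding is_weight_def by (rule conjunct2)
  hence "set_integrable lborel {a..b} w" using compact_Icc by blast
  hence si: "set_integrable lborel I w" using set_integrable_subset ab dyadic_sets[OF I] by metis
  have nn: "\<And>x. 0 \<le> w x" using wt unfolding is_weight_def by (simp)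
  define g where "g x = indicator I x * w x" for x
  have gi: "integrable lborel g" using si unfolding set_integrable_def g_def by simp
  have gnn: "\<And>x. 0 \<le> g x" unfolding g_def using nn by simp
  have "(\<integral>\<^sup>+x. ennreal (g x) \<partial>lborel) = ennreal (integral\<^sup>L lborel g)"
    by (rule nn_integral_eq_integral[OF gi]) (simp add: gnn)
  moreover have "\<And>x. ennreal (g x) = ennreal (w x) * indicator I x"
    unfolding g_def by (simp split: split_indicator)
  moreover have "wmeas w I = integral\<^sup>L lborel g"
    unfolding wmeas_def set_lebesgue_integral_def g_def by simp
  ultimately show "(\<integral>\<^sup>+x\<in>I. ennreal (w x) \<partial>lborel) = ennreal (wmeas w I)"
    by simp
  show "0 \<le> wmeas w I" unfolding \<open>wmeas w I = integral\<^sup>L lborel g\<close>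
    using gnn by (simp add: integral_nonneg)
qed

lemma distN_props:
  assumes wt: "is_weight w" and I: "I \<in> dyadic_intervals"
  shows "emeasure lborel {x\<in>I. t < w x} = ennreal (len I * distN w I t)"
    "0 \<le> distN w I t" "distN w I t \<le> 1"
    "t1 \<le> t2 \<Longrightarrow> distN w I t2 \<le> distN w I t1"
proof -
  have wb[measurable]: "w \<in> borel_measurable borel" by (rule weight_borel[OF wt])
  have Ib[measurable]: "I \<in> sets borel" by (rule dyadic_sets_borel[OF I])
  have L: "0 < len I" by (rule dyadic_len_pos[OF I])
  have E: "{x. t < w x} \<in> sets lborel" for t by measurable
  have eq: "{x\<in>I. t < w x} = {x. t < w x} \<inter> I" for t by auto
  note mp = meas_part[OF I E]
  show "emeasure lborel {x\<in>I. t < w x} = ennreal (len I * distN w I t)"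
    using mp(1)[of t] L by (simp add: eq distN_def)
  show "0 \<le> distN w I t" using L by (simp add: distN_def)
  show "distN w I t \<le> 1" using mp(2)[of t] L by (simp add: eq distN_def)
  assume "t1 \<le> t2"
  hence "emeasure lborel {x\<in>I. t2 < w x} \<le> emeasure lborel {x\<in>I. t1 < w x}"
    by (intro emeasure_mono) auto
  hence "measure lborel ({x. t2 < w x} \<inter> I) \<le> measure lborel ({x. t1 < w x} \<inter> I)"
    unfolding eq mp(1) by simp
  thus "distN w I t2 \<le> distN w I t1" using L by (simp add: eq distN_def divide_right_mono)
qed

lemma comp_distN_measurable:
  fixes G :: "real \<Rightarrow> real"
  assumes wt: "is_weight w" and I: "I \<in> dyadic_intervals" and G: "mono_on {0..1} G"
  shows "(\<lambda>t. G (distN w I t)) \<in> borel_measurable borel"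
proof -
  have "mono (\<lambda>t. - G (distN w I t))"
  proof (rule monoI)
    fix t1 t2 :: real assume "t1 \<le> t2"
    hence le: "distN w I t2 \<le> distN w I t1" by (rule distN_props(4)[OF wt I])
    have "distN w I t1 \<in> {0..1}" "distN w I t2 \<in> {0..1}"
      using distN_props(2,3)[OF wt I] by auto
    hence "G (distN w I t2) \<le> G (distN w I t1)"
      using le by (intro mono_onD[OF G])
    thus "- G (distN w I t1) \<le> - G (distN w I t2)" by simp
  qed
  hence "(\<lambda>t. - G (distN w I t)) \<in> borel_measurable borel" by (rule borel_measurable_mono)
  from borel_measurable_uminus[OF this] show ?thesis by (simp only: minus_minus)
qed



definition F1 :: "(real \<Rightarrow> real) \<Rightarrow> real \<Rightarrow> real" where
  "F1 \<Psi> s = (if s = 0 then 0 else s * \<Psi> s)"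

lemma amgm: fixes q :: real assumes "0 < q" shows "2 \<le> q + 1 / q"
proof -
  have "0 \<le> (q - 1)^2" by simp
  hence "2 * q \<le> q * q + 1" by (simp add: power2_eq_square algebra_simps)
  hence "2 * q / q \<le> (q * q + 1) / q" using assms by (intro divide_right_mono) auto
  thus ?thesis using assms by (simp add: add_divide_distrib)
qed

lemma pointwise_amgm:
  fixes N p c :: real assumes "0 \<le> N" "0 < p" "0 < c"
  shows "2 * N \<le> c * (N * p) + (1 / c) * (N / p)"
proof -
  have "2 * N \<le> N * (c * p + 1 / (c * p))"
    using amgm[of "c * p"] assms by (simp add: mult_left_mono mult.commute)
  also have "\<dots> = c * (N * p) + (1 / c) * (N / p)" using assms by (simp add: field_simps)
  finally show ?thesis .
qed

lemma F1_mono: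
  assumes pos: "\<forall>s\<in>{0<..1}. 0 < \<Psi> s" and inc: "mono_on {0<..1} (\<lambda>s. s * \<Psi> s)"
  shows "mono_on {0..1} (F1 \<Psi>)"
proof (rule mono_onI)
  fix r s :: real assume rs: "r \<in> {0..1}" "s \<in> {0..1}" "r \<le> s"
  show "F1 \<Psi> r \<le> F1 \<Psi> s"
  proof (cases "r = 0")
    case True
    thus ?thesis using rs pos by (auto simp: F1_def less_le)
  next
    case False
    hence "s \<noteq> 0" using rs by auto
    thus ?thesis using False rs inc by (auto simp: F1_def mono_on_def)
  qed
qed

lemma F2_mono:
  assumes pos: "\<forall>s\<in>{0<..1}. 0 < \<Psi> s" and dec: "antimono_on {0<..1} \<Psi>"
  shows "mono_on {0..1} (F2 \<Psi>)"
proof (rule mono_onI)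
  fix r s :: real assume rs: "r \<in> {0..1}" "s \<in> {0..1}" "r \<le> s"
  show "F2 \<Psi> r \<le> F2 \<Psi> s"
  proof (cases "r = 0")
    case True
    thus ?thesis using rs pos by (auto simp: F2_def less_le)
  next
    case False
    hence r0: "0 < r" and s0: "0 < s" using rs by auto
    have "\<Psi> s \<le> \<Psi> r" using dec rs r0 s0 by (auto simp: monotone_on_def)
    moreover have "0 < \<Psi> s" using pos rs s0 by auto
    ultimately have "r / \<Psi> r \<le> s / \<Psi> s" using rs r0 by (intro frac_le) auto
    thus ?thesis using r0 s0 by (simp add: F2_def)
  qed
qed

lemma stepA:
  fixes \<Psi> :: "real \<Rightarrow> real"
  assumes pos: "\<forall>s\<in>{0<..1}. 0 < \<Psi> s" and dec: "antimono_on {0<..1} \<Psi>"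
    and inc: "mono_on {0<..1} (\<lambda>s. s * \<Psi> s)"
    and wt: "is_weight w" and I: "I \<in> dyadic_intervals" and fin: "nPsi \<Psi> (distN w I) < \<infinity>"
    and nz: "wmeas w I \<noteq> 0"
  shows "ennreal ((avg w I)\<^sup>2 / enn2real (nPsi \<Psi> (distN w I)))
         \<le> (\<integral>\<^sup>+t\<in>{0<..}. ennreal (F2 \<Psi> (distN w I t)) \<partial>lborel)"
proof -
  define N where "N = distN w I"
  define L where "L = len I"
  define m where "m = avg w I"
  define n where "n = nPsi \<Psi> N"
  define nr where "nr = enn2real n"
  define A where "A = (\<integral>\<^sup>+t\<in>{0<..}. ennreal (F2 \<Psi> (N t)) \<partial>lborel)"
  have wb[measurable]: "w \<in> borel_measurable borel" by (rule weight_borel[OF wt])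
  have nnw: "\<And>x. 0 \<le> w x" using wt unfolding is_weight_def by simp
  have L0: "0 < L" unfolding L_def by (rule dyadic_len_pos[OF I])
  have wm0: "0 < wmeas w I" using wmeas_nn(2)[OF wt I] nz by simp
  have m0: "0 < m" unfolding m_def avg_def using wm0 L0 by (simp add: L_def)
  have Nm[measurable]: "N \<in> borel_measurable borel"
    using comp_distN_measurable[OF wt I, of "\<lambda>x. x"] by (simp add: N_def mono_on_def)
  have N01: "0 \<le> N t" "N t \<le> 1" for t using distN_props(2,3)[OF wt I] by (auto simp: N_def)
  have g1m[measurable]: "(\<lambda>t. F1 \<Psi> (N t)) \<in> borel_measurable borel"
    unfolding N_def by (rule comp_distN_measurable[OF wt I F1_mono[OF pos inc]])
  have g2m[measurable]: "(\<lambda>t. F2 \<Psi> (N t)) \<in> borel_measurable borel"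
    unfolding N_def by (rule comp_distN_measurable[OF wt I F2_mono[OF pos dec]])
  have A1: "(\<integral>\<^sup>+t\<in>{0<..}. ennreal (N t) \<partial>lborel) = ennreal m"
  proof -
    have "ennreal (wmeas w I) = (\<integral>\<^sup>+x\<in>I. ennreal (w x) \<partial>lborel)" by (rule wmeas_nn(1)[OF wt I, symmetric])
    also have "\<dots> = (\<integral>\<^sup>+t\<in>{0<..}. emeasure lborel {x\<in>I. t < w x} \<partial>lborel)"
      by (rule layer_cake[OF wb nnw dyadic_sets_borel[OF I]])
    also have "\<dots> = (\<integral>\<^sup>+t. ennreal L * (ennreal (N t) * indicator {0<..} t) \<partial>lborel)"
    proof (rule nn_integral_cong)
      fix t
      have "emeasure lborel {x\<in>I. t < w x} = ennreal L * ennreal (N t)"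
        unfolding distN_props(1)[OF wt I] L_def N_def using L0 N01[of t]
        by (simp add: ennreal_mult L_def N_def)
      thus "emeasure lborel {x\<in>I. t < w x} * indicator {0<..} t = ennreal L * (ennreal (N t) * indicator {0<..} t)"
        by (simp add: mult.assoc)
    qed
    also have "\<dots> = ennreal L * (\<integral>\<^sup>+t\<in>{0<..}. ennreal (N t) \<partial>lborel)"
      by (rule nn_integral_cmult) measurable
    finally have e: "ennreal L * (\<integral>\<^sup>+t\<in>{0<..}. ennreal (N t) \<partial>lborel) = ennreal L * ennreal m"
      using L0 m0 by (simp add: ennreal_mult[symmetric] m_def avg_def L_def)
    show ?thesis using e L0 by (subst (asm) ennreal_mult_cancel_left) auto
  qed
  have nfin: "n = ennreal nr" unfolding nr_def using fin by (simp add: n_def N_def less_top)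
  have nr0: "0 \<le> nr" by (simp add: nr_def)
  show ?thesis
  proof (cases "nr = 0")
    case True
    thus ?thesis by (simp add: N_def n_def nr_def)
  next
    case False
    hence nrp: "0 < nr" using nr0 by simp
    define c where "c = m / nr"
    have c0: "0 < c" using m0 nrp by (simp add: c_def)
    have n_eq: "n = (\<integral>\<^sup>+t\<in>{0<..}. ennreal (F1 \<Psi> (N t)) \<partial>lborel)"
      by (simp add: n_def nPsi_def F1_def)
    have key: "2 * ennreal m \<le> ennreal c * n + ennreal (1 / c) * A"
    proof -
      have "2 * ennreal m = (\<integral>\<^sup>+t. 2 * (ennreal (N t) * indicator {0<..} t) \<partial>lborel)"
        by (subst nn_integral_cmult) (measurable, simp add: A1)
      also have "\<dots> \<le> (\<integral>\<^sup>+t. ennreal c * (ennreal (F1 \<Psi> (N t)) * indicator {0<..} t)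
                               + ennreal (1/c) * (ennreal (F2 \<Psi> (N t)) * indicator {0<..} t) \<partial>lborel)"
      proof (rule nn_integral_mono)
        fix t
        have "2 * N t \<le> c * F1 \<Psi> (N t) + (1 / c) * F2 \<Psi> (N t)"
        proof (cases "N t = 0")
          case True thus ?thesis by (simp add: F1_def F2_def)
        next
          case False
          hence "0 < N t" using N01[of t] by simp
          hence "0 < \<Psi> (N t)" using pos N01[of t] by auto
          thus ?thesis using pointwise_amgm[OF N01(1)[of t] _ c0] False by (simp add: F1_def F2_def)
        qed
        moreover have nn12: "0 \<le> F1 \<Psi> (N t) \<and> 0 \<le> F2 \<Psi> (N t)"
        proof (cases "N t = 0")
          case True thus ?thesis by (simp add: F1_def F2_def)
        next
          case False
          hence Np: "0 < N t" using N01[of t] by simp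
          hence "0 < \<Psi> (N t)" using pos N01[of t] by auto
          thus ?thesis using Np by (simp add: F1_def F2_def)
        qed
        hence "0 \<le> F1 \<Psi> (N t)" "0 \<le> F2 \<Psi> (N t)" by auto
        ultimately have "ennreal (2 * N t) \<le> ennreal (c * F1 \<Psi> (N t) + (1 / c) * F2 \<Psi> (N t))"
          by (intro ennreal_leI)
        also have "\<dots> = ennreal (c * F1 \<Psi> (N t)) + ennreal ((1 / c) * F2 \<Psi> (N t))"
          using c0 \<open>0 \<le> F1 \<Psi> (N t)\<close> \<open>0 \<le> F2 \<Psi> (N t)\<close> by (intro ennreal_plus) auto
        also have "ennreal (c * F1 \<Psi> (N t)) = ennreal c * ennreal (F1 \<Psi> (N t))"
          using c0 \<open>0 \<le> F1 \<Psi> (N t)\<close> by (intro ennreal_mult) auto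
        also have "ennreal ((1 / c) * F2 \<Psi> (N t)) = ennreal (1/c) * ennreal (F2 \<Psi> (N t))"
          using c0 \<open>0 \<le> F2 \<Psi> (N t)\<close> by (intro ennreal_mult) auto
        finally have "2 * ennreal (N t) \<le> ennreal c * ennreal (F1 \<Psi> (N t)) + ennreal (1/c) * ennreal (F2 \<Psi> (N t))"
          using N01[of t] by (simp add: ennreal_mult)
        thus "2 * (ennreal (N t) * indicator {0<..} t) \<le> ennreal c * (ennreal (F1 \<Psi> (N t)) * indicator {0<..} t)
                               + ennreal (1/c) * (ennreal (F2 \<Psi> (N t)) * indicator {0<..} t)"
          by (simp split: split_indicator)
      qed
      also have "\<dots> = ennreal c * n + ennreal (1 / c) * A"
        unfolding n_eq A_def
        by (subst nn_integral_add) (measurable, simp add: nn_integral_cmult)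
      finally show ?thesis .
    qed
    show ?thesis
    proof (cases "A = \<infinity>")
      case True
      thus ?thesis by (simp add: A_def N_def)
    next
      case False
      then obtain a where a: "A = ennreal a" "0 \<le> a" by (cases A) auto
      have e1: "2 * ennreal m = ennreal (2 * m)"
        using ennreal_mult[of 2 m] m0 by simp
      have e2: "ennreal c * ennreal nr = ennreal (c * nr)" using c0 nr0 by (intro ennreal_mult[symmetric]) auto
      have e3: "ennreal (1 / c) * ennreal a = ennreal (1 / c * a)" using c0 a by (intro ennreal_mult[symmetric]) auto
      have e4: "ennreal (c * nr) + ennreal (1 / c * a) = ennreal (c * nr + 1 / c * a)"
        using c0 a nr0 by (intro ennreal_plus[symmetric]) auto
      have "ennreal (2 * m) \<le> ennreal (c * nr + 1 / c * a)"
        using key unfolding nfin a(1) e1 e2 e3 e4 .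
      hence "2 * m \<le> c * nr + 1 / c * a" using c0 a nr0 by (subst (asm) ennreal_le_iff) auto
      hence "2 * m \<le> m + a * nr / m" using nrp m0 by (simp add: c_def mult.commute)
      hence "m * m \<le> a * nr" using m0 by (simp add: field_simps)
      hence "m\<^sup>2 / nr \<le> a" using nrp by (simp add: power2_eq_square pos_divide_le_eq)
      hence "ennreal (m\<^sup>2 / nr) \<le> A" unfolding a(1) by (rule ennreal_leI)
      thus ?thesis unfolding A_def m_def nr_def n_def N_def .
    qed
  qed
qed



theorem theorem2p4:
  fixes \<Psi> :: "real \<Rightarrow> real" and C0 :: real
  assumes pos: "\<forall>s\<in>{0<..1}. 0 < \<Psi> s"
    and dec: "antimono_on {0<..1} \<Psi>"
    and inc: "mono_on {0<..1} (\<lambda>s. s * \<Psi> s)"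
    and int: "(\<integral>\<^sup>+ s \<in> {0<..1}. ennreal (1 / (s * \<Psi> s)) \<partial>lborel) < \<infinity>"
  shows "\<exists>C. \<forall>\<alpha> w J. carleson \<alpha> C0 \<longrightarrow> is_weight w \<longrightarrow>
           (\<forall>I\<in>dyadic_intervals. nPsi \<Psi> (distN w I) < \<infinity>) \<longrightarrow> J \<in> dyadic_intervals \<longrightarrow>
           (\<Sum>\<^sub>\<infinity>I\<in>{I\<in>dyadic_intervals. I \<subseteq> J \<and> wmeas w I \<noteq> 0}.
              ennreal ((avg w I)\<^sup>2 * \<alpha> I * len I / enn2real (nPsi \<Psi> (distN w I))))
           \<le> ennreal (C * wmeas w J)"
proof -
  define K where "K = (\<Sum>k. ennreal (1 / \<Psi> ((1/2)^k)))"
  define C' where "C' = max C0 0"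
  have "K \<le> 2 * (\<integral>\<^sup>+ s \<in> {0<..1}. ennreal (1 / (s * \<Psi> s)) \<partial>lborel)"
    unfolding K_def by (rule const_finite[OF pos inc])
  also have "\<dots> < \<infinity>" using int by (simp add: ennreal_mult_less_top)
  finally have Kfin: "ennreal (2 * C') * K \<noteq> \<infinity>" by (simp add: ennreal_mult_eq_top_iff)
  define C where "C = enn2real (ennreal (2 * C') * K)"
  have CK: "ennreal C = ennreal (2 * C') * K" unfolding C_def using Kfin by (simp add: less_top)
  have C0': "0 \<le> C" by (simp add: C_def)
  show ?thesis
  proof (rule exI[of _ C], intro allI impI)
    fix \<alpha> :: "real set \<Rightarrow> real" and w :: "real \<Rightarrow> real" and J :: "real set"
    assume car: "carleson \<alpha> C0" and wt: "is_weight w"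
      and fin: "\<forall>I\<in>dyadic_intervals. nPsi \<Psi> (distN w I) < \<infinity>" and J: "J \<in> dyadic_intervals"
    define S where "S = {I\<in>dyadic_intervals. I \<subseteq> J \<and> wmeas w I \<noteq> 0}"
    define DJ where "DJ = {I\<in>dyadic_intervals. I \<subseteq> J}"
    define a where "a I = ennreal (\<alpha> I * len I)" for I
    define g where "g I t = ennreal (F2 \<Psi> (distN w I t))" for I t
    define trm where "trm I = ennreal ((avg w I)\<^sup>2 * \<alpha> I * len I / enn2real (nPsi \<Psi> (distN w I)))" for I
    have wb[measurable]: "w \<in> borel_measurable borel" by (rule weight_borel[OF wt])
    have nnw: "\<And>x. 0 \<le> w x" using wt unfolding is_weight_def by simp
    have cntS: "countable S" unfolding S_def by (rule countable_subset[OF _ countable_dyadic]) auto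
    have cntD: "countable DJ" unfolding DJ_def by (rule countable_subset[OF _ countable_dyadic]) auto
    have alpha0: "\<And>I. I \<in> dyadic_intervals \<Longrightarrow> 0 \<le> \<alpha> I" using car unfolding carleson_def by blast
    have gm[measurable]: "g I \<in> borel_measurable borel" if "I \<in> dyadic_intervals" for I
      unfolding g_def using comp_distN_measurable[OF wt that F2_mono[OF pos dec]] by measurable
    have "(\<Sum>\<^sub>\<infinity>I\<in>S. trm I) = (\<integral>\<^sup>+I. trm I \<partial>count_space S)" by (rule infsum_nn[OF cntS])
    also have "\<dots> = (\<integral>\<^sup>+I. trm I * indicator S I \<partial>count_space UNIV)"
      by (simp add: nn_integral_count_space_indicator)
    also have "\<dots> \<le> (\<integral>\<^sup>+I. (a I * (\<integral>\<^sup>+t\<in>{0<..}. g I t \<partial>lborel)) * indicator DJ I \<partial>count_space UNIV)"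
    proof (rule nn_integral_mono)
      fix I
      show "trm I * indicator S I \<le> (a I * (\<integral>\<^sup>+t\<in>{0<..}. g I t \<partial>lborel)) * indicator DJ I"
      proof (cases "I \<in> S")
        case True
        hence I: "I \<in> dyadic_intervals" "I \<subseteq> J" "wmeas w I \<noteq> 0" by (auto simp: S_def)
        define nr where "nr = enn2real (nPsi \<Psi> (distN w I))"
        have eq: "(avg w I)\<^sup>2 * \<alpha> I * len I / nr = (\<alpha> I * len I) * ((avg w I)\<^sup>2 / nr)" by simp
        have nr0: "0 \<le> nr" by (simp add: nr_def)
        have "ennreal ((\<alpha> I * len I) * ((avg w I)\<^sup>2 / nr)) = a I * ennreal ((avg w I)\<^sup>2 / nr)"
          unfolding a_def using alpha0[OF I(1)] dyadic_len_pos[OF I(1)] nr0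
          by (intro ennreal_mult) auto
        hence "trm I = a I * ennreal ((avg w I)\<^sup>2 / nr)"
          unfolding trm_def nr_def[symmetric] eq .
        also have "\<dots> \<le> a I * (\<integral>\<^sup>+t\<in>{0<..}. g I t \<partial>lborel)"
          unfolding nr_def g_def
          by (intro mult_left_mono stepA[OF pos dec inc wt I(1)]) (use fin I in auto)
        finally show ?thesis using True I by (simp add: DJ_def)
      qed simp
    qed
    also have "\<dots> = (\<integral>\<^sup>+I. a I * (\<integral>\<^sup>+t\<in>{0<..}. g I t \<partial>lborel) \<partial>count_space DJ)"
      by (simp add: nn_integral_count_space_indicator)
    also have "\<dots> = (\<integral>\<^sup>+I. (\<integral>\<^sup>+t. a I * (g I t * indicator {0<..} t) \<partial>lborel) \<partial>count_space DJ)"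
    proof (rule nn_integral_cong)
      fix I assume "I \<in> space (count_space DJ)"
      hence "I \<in> dyadic_intervals" by (simp add: DJ_def)
      thus "a I * (\<integral>\<^sup>+t\<in>{0<..}. g I t \<partial>lborel) = (\<integral>\<^sup>+t. a I * (g I t * indicator {0<..} t) \<partial>lborel)"
        by (intro nn_integral_cmult[symmetric]) measurable
    qed
    also have "\<dots> = (\<integral>\<^sup>+t. (\<integral>\<^sup>+I. a I * (g I t * indicator {0<..} t) \<partial>count_space DJ) \<partial>lborel)"
      by (rule nn_integral_count_space_nn_integral[OF cntD, symmetric]) (auto simp: DJ_def)
    also have "\<dots> \<le> (\<integral>\<^sup>+t. (ennreal (2 * C') * K) * (emeasure lborel {x\<in>J. t < w x} * indicator {0<..} t) \<partial>lborel)"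
    proof (rule nn_integral_mono)
      fix t
      define E where "E = {x. t < w x}"
      have E[measurable]: "E \<in> sets lborel" unfolding E_def by measurable
      have "(\<integral>\<^sup>+I. a I * (g I t * indicator {0<..} t) \<partial>count_space DJ)
            = (\<integral>\<^sup>+I. a I * g I t \<partial>count_space DJ) * indicator {0<..} t"
        by (subst nn_integral_multc[symmetric]) (auto simp: mult.assoc)
      also have "(\<integral>\<^sup>+I. a I * g I t \<partial>count_space DJ)
          = (\<integral>\<^sup>+I. ennreal (\<alpha> I * len I) * ennreal (F2 \<Psi> (measure lborel (E \<inter> I) / len I)) \<partial>count_space DJ)"
      proof (rule nn_integral_cong)
        fix I
        have "{x \<in> I. w x > t} = E \<inter> I" by (auto simp: E_def)
        thus "a I * g I t = ennreal (\<alpha> I * len I) * ennreal (F2 \<Psi> (measure lborel (E \<inter> I) / len I))"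
          by (simp add: a_def g_def distN_def)
      qed
      also have "\<dots> \<le> ennreal (2 * C') * K * emeasure lborel (E \<inter> J)"
        unfolding DJ_def K_def C'_def by (rule lemmaG[OF pos dec car E J])
      also have "E \<inter> J = {x\<in>J. t < w x}" by (auto simp: E_def)
      finally show "(\<integral>\<^sup>+I. a I * (g I t * indicator {0<..} t) \<partial>count_space DJ)
           \<le> (ennreal (2 * C') * K) * (emeasure lborel {x\<in>J. t < w x} * indicator {0<..} t)"
        by (simp add: mult_right_mono mult.assoc)
    qed
    also have "\<dots> = (ennreal (2 * C') * K) * (\<integral>\<^sup>+t\<in>{0<..}. emeasure lborel {x\<in>J. t < w x} \<partial>lborel)"
    proof -
      have "(\<lambda>t. emeasure lborel {x\<in>J. t < w x}) = (\<lambda>t. ennreal (len J * distN w J t))"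
        using distN_props(1)[OF wt J] by auto
      moreover have "(\<lambda>t. distN w J t) \<in> borel_measurable borel"
        using comp_distN_measurable[OF wt J, of "\<lambda>x. x"] by (simp add: mono_on_def)
      ultimately have [measurable]: "(\<lambda>t. emeasure lborel {x\<in>J. t < w x}) \<in> borel_measurable borel"
        by (simp only:) measurable
      show ?thesis by (rule nn_integral_cmult) measurable
    qed
    also have "(\<integral>\<^sup>+t\<in>{0<..}. emeasure lborel {x\<in>J. t < w x} \<partial>lborel) = (\<integral>\<^sup>+x\<in>J. ennreal (w x) \<partial>lborel)"
      by (rule layer_cake[OF wb nnw dyadic_sets_borel[OF J], symmetric])
    also have "\<dots> = ennreal (wmeas w J)" by (rule wmeas_nn(1)[OF wt J])
    also have "(ennreal (2 * C') * K) * ennreal (wmeas w J) = ennreal (C * wmeas w J)"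
      unfolding CK[symmetric] using C0' wmeas_nn(2)[OF wt J] by (simp add: ennreal_mult)
    finally show "(\<Sum>\<^sub>\<infinity>I\<in>{I\<in>dyadic_intervals. I \<subseteq> J \<and> wmeas w I \<noteq> 0}.
              ennreal ((avg w I)\<^sup>2 * \<alpha> I * len I / enn2real (nPsi \<Psi> (distN w I))))
           \<le> ennreal (C * wmeas w J)" unfolding S_def trm_def .
  qed
qed


end
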